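(* Let $\alpha>0$, $\beta>0$, and let $z_s$ be a sufficiently smooth scalar source signal on a finite interval $\mathcal{I}_t=[t_1,t_2]$. Let $Z^*:\mathcal{I}_t\to\mathbb{R}^n$ be the solution of the ideal cohesive dynamics $$\dot Z^*(t)=-\alpha\beta K Z^*(t)+[I-\beta K]\dot Z^*(t)+\beta B\,[\alpha z_s(t)+\dot z_s(t)],$$ and, for a delay $\tau>0$, let $Z$ be a (twice differentiable) solution of the delayed-self-reinforcement (DSR) delay-differential equation $$\dot Z(t)=-\alpha\beta K Z(t)+\tfrac{1}{\tau}[Z(t)-Z(t-\tau)]-\tfrac{\beta}{\tau}K[Z(t)-Z(t-\tau)]+\alpha\beta B z_s(t)+\beta B\dot z_s(t),$$ with the same synchronized initial condition, $Z(t_1)=Z^*(t_1)$. Then the deviation $E_Z=Z-Z^*$ satisfies $$\max_{t\in\mathcal{I}_t}\|E_Z(t)\|_\infty\to 0\quad\text{as}\quad \max_{t\in\mathcal{I}_t}\|\tau\ddot Z(t)\|_\infty\to 0 .$$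
   Context: A directed graph $\mathcal{G}=(\mathcal{V},\mathcal{E})$ has nodes $\mathcal{V}=\{1,\dots,n+1\}$, $n>1$, where node $n+1$ is the source $s$; neighbors of $i$ are $N_i=\{k\neq i:(k,i)\in\mathcal{E}\}$. The Laplacian $L=(l_{ik})$ is the $(n+1)\times(n+1)$ real matrix with $l_{ik}=-w_{ik}$ if $k\in N_i$, $l_{ii}=\sum_{m=1}^{n+1}w_{im}$, and $l_{ik}=0$ otherwise, where $w_{ik}>0$ if $k\in N_i$ and $w_{ik}=0$ otherwise. Partition $L=\begin{bmatrix}K&-B\\ \star&\star\end{bmatrix}$ with $K$ the $n\times n$ pinned Laplacian and $B=[w_{1,s},\dots,w_{n,s}]^T$. Standing assumption: $\mathcal{G}$ has a directed path from the source node $s$ to every other node; then $K$ is invertible, all eigenvalues of $K$ have positive real part, and $K\mathbf{1}_n=B$. Norms $\|\cdot\|_\infty$ are vector max-norms.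
   Formalization: Z is twice differentiable, and the bound on $\|\tau\ddot Z(t)\|_\infty$ holds, on the whole history interval [t1 - tau, t2] rather than only on $\mathcal{I}_t=[t_1,t_2]$, the limit being uniform in the delay tau. Apart from conventions, each condition added here is assumed in the paper as well or is needed for the statement above to hold. *)

theory Defs
  imports "HOL-Analysis.Analysis"
begin

text \<open>Follower nodes are indexed by the finite type 'n (so n = CARD('n));
  the source s = n+1 is kept separate.  w i k > 0 iff (k,i) is an edge between
  followers, ws i > 0 iff (s,i) is an edge (i.e. ws i = w_{i,s}).\<close>

definition vinf :: "real ^ 'n \<Rightarrow> real" where
  "vinf x = Max (range (\<lambda>i. \<bar>x $ i\<bar>))"

text \<open>Pinned Laplacian K (upper-left n x n block of L).\<close>
definition pinned_laplacian :: "('n::finite \<Rightarrow> 'n \<Rightarrow> real) \<Rightarrow> ('n \<Rightarrow> real) \<Rightarrow> real ^ 'n ^ 'n" where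
  "pinned_laplacian w ws = (\<chi> i k. if i = k then (\<Sum>m\<in>UNIV - {i}. w i m) + ws i else - w i k)"

definition source_vec :: "('n::finite \<Rightarrow> real) \<Rightarrow> real ^ 'n" where
  "source_vec ws = (\<chi> i. ws i)"

inductive reach_from_source :: "('n \<Rightarrow> 'n \<Rightarrow> real) \<Rightarrow> ('n \<Rightarrow> real) \<Rightarrow> 'n \<Rightarrow> bool"
  for w ws where
  src: "ws i > 0 \<Longrightarrow> reach_from_source w ws i"
| step: "reach_from_source w ws k \<Longrightarrow> k \<noteq> i \<Longrightarrow> w i k > 0 \<Longrightarrow> reach_from_source w ws i"

end

theory Submission
  imports Defs
begin

lemma vd_bound:
  fixes f :: "real \<Rightarrow> 'a::real_normed_vector"
  assumes "a \<le> b" "\<And>x. x \<in> {a..b} \<Longrightarrow> (f has_vector_derivative f' x) (at x within {a..b})"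
    "\<And>x. x \<in> {a..b} \<Longrightarrow> norm (f' x) \<le> M"
  shows "norm (f b - f a) \<le> M * (b - a)"
proof -
  have on: "onorm (\<lambda>h. h *\<^sub>R f' x) \<le> M" if "x \<in> {a..b}" for x
  proof (rule onorm_le)
    fix h :: real
    have "\<bar>h\<bar> * norm (f' x) \<le> \<bar>h\<bar> * M" using assms(3)[OF that] by (simp add: mult_left_mono)
    then show "norm (h *\<^sub>R f' x) \<le> M * norm h" by (simp add: mult.commute)
  qed
  have "norm (f b - f a) \<le> M * norm (b - a)"
    apply (rule differentiable_bound[where f'="\<lambda>x h. h *\<^sub>R f' x" and S="{a..b}"])
    using assms(2) on assms(1) by (auto simp: has_vector_derivative_def)
  then show ?thesis using assms(1) by simp
qed
lemma taylor1:
  fixes Z :: "real \<Rightarrow> 'a::real_normed_vector"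
  assumes tau: "\<tau> > 0"
    and d1: "\<And>s. s \<in> {t-\<tau>..t} \<Longrightarrow> (Z has_vector_derivative Z' s) (at s within {t-\<tau>..t})"
    and d2: "\<And>s. s \<in> {t-\<tau>..t} \<Longrightarrow> (Z' has_vector_derivative Z'' s) (at s within {t-\<tau>..t})"
    and M: "\<And>s. s \<in> {t-\<tau>..t} \<Longrightarrow> norm (Z'' s) \<le> M"
  shows "norm (Z t - Z (t-\<tau>) - \<tau> *\<^sub>R Z' t) \<le> M * \<tau>^2"
proof -
  have M0: "0 \<le> M" using M[of t] tau by (auto intro: order_trans[OF norm_ge_zero])
  have a: "norm (Z' s - Z' t) \<le> M * \<tau>" if s: "s \<in> {t-\<tau>..t}" for s
  proof -
    have "norm (Z' t - Z' s) \<le> M * (t - s)"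
      by (rule vd_bound) (use s in \<open>auto intro: has_vector_derivative_within_subset[OF d2] M\<close>)
    also have "\<dots> \<le> M * \<tau>" using s M0 by (auto intro: mult_left_mono)
    finally show ?thesis by (simp add: norm_minus_commute)
  qed
  have "norm ((Z t - t *\<^sub>R Z' t) - (Z (t-\<tau>) - (t-\<tau>) *\<^sub>R Z' t)) \<le> (M * \<tau>) * (t - (t - \<tau>))"
  proof (rule vd_bound[where f="\<lambda>s. Z s - s *\<^sub>R Z' t" and f'="\<lambda>s. Z' s - Z' t"])
    show "((\<lambda>s. Z s - s *\<^sub>R Z' t) has_vector_derivative Z' s - Z' t) (at s within {t - \<tau>..t})"
      if "s \<in> {t-\<tau>..t}" for s
    proof -
      have "((\<lambda>s. s *\<^sub>R Z' t) has_vector_derivative Z' t) (at s within {t-\<tau>..t})"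
        by (auto intro!: derivative_eq_intros)
      from has_vector_derivative_diff[OF d1[OF that] this] show ?thesis .
    qed
  qed (use tau a in auto)
  moreover have "(Z t - t *\<^sub>R Z' t) - (Z (t-\<tau>) - (t-\<tau>) *\<^sub>R Z' t) = Z t - Z (t-\<tau>) - \<tau> *\<^sub>R Z' t"
    by (simp add: algebra_simps)
  ultimately show ?thesis by (simp add: power2_eq_square mult.assoc)
qed

lemma vinf_le_norm: "vinf (x::real^'n) \<le> norm x"
  unfolding vinf_def by (auto intro: component_le_norm_cart)

lemma comp_le_vinf: "\<bar>x $ i\<bar> \<le> vinf (x::real^'n)"
  unfolding vinf_def by (rule Max_ge) auto

lemma norm_le_vinf: "norm (x::real^'n) \<le> real CARD('n) * vinf x"
proof -
  have "norm x \<le> (\<Sum>i\<in>UNIV. \<bar>x$i\<bar>)" by (rule norm_le_l1_cart)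
  also have "\<dots> \<le> (\<Sum>i\<in>(UNIV::'n set). vinf x)" by (rule sum_mono) (rule comp_le_vinf)
  finally show ?thesis by simp
qed

lemma K_one: "pinned_laplacian w ws *v (vec 1) = source_vec ws"
proof -
  have "(\<Sum>k\<in>UNIV. (if i = k then (\<Sum>m\<in>UNIV - {i}. w i m) + ws i else - w i k)) = ws i" for i
  proof -
    have "(\<Sum>k\<in>UNIV. (if i = k then (\<Sum>m\<in>UNIV - {i}. w i m) + ws i else - w i k))
       = ((\<Sum>m\<in>UNIV - {i}. w i m) + ws i) + (\<Sum>k\<in>UNIV - {i}. - w i k)"
      by (subst sum.remove[of UNIV i]) (auto intro!: sum.cong)
    then show ?thesis by (simp add: sum_negf)
  qed
  note h = this
  show ?thesis unfolding vec_eq_iff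
  proof
    fix i
    have "(pinned_laplacian w ws *v vec 1) $ i = (\<Sum>k\<in>UNIV. (if i = k then (\<Sum>m\<in>UNIV - {i}. w i m) + ws i else - w i k))"
      unfolding pinned_laplacian_def matrix_vector_mult_def by simp
    then show "(pinned_laplacian w ws *v vec 1) $ i = source_vec ws $ i"
      using h[of i] by (simp add: source_vec_def)
  qed
qed


lemma K_inj:
  fixes w :: "'n::finite \<Rightarrow> 'n \<Rightarrow> real"
  assumes w_nonneg: "\<And>i k. w i k \<ge> 0" and ws_nonneg: "\<And>i. ws i \<ge> 0"
    and paths: "\<And>i. reach_from_source w ws i"
    and Kv: "pinned_laplacian w ws *v v = 0"
  shows "v = 0"
proof -
  define M where "M = vinf v"
  have le: "\<bar>v $ i\<bar> \<le> M" for i unfolding M_def by (rule comp_le_vinf)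
  have row: "((\<Sum>m\<in>UNIV - {i}. w i m) + ws i) * v $ i = (\<Sum>m\<in>UNIV - {i}. w i m * v $ m)" for i
  proof -
    have "0 = (pinned_laplacian w ws *v v) $ i" using Kv by simp
    also have "\<dots> = (\<Sum>k\<in>UNIV. (if i = k then (\<Sum>m\<in>UNIV - {i}. w i m) + ws i else - w i k) * v $ k)"
      unfolding pinned_laplacian_def matrix_vector_mult_def by simp
    also have "\<dots> = ((\<Sum>m\<in>UNIV - {i}. w i m) + ws i) * v $ i + (\<Sum>k\<in>UNIV - {i}. - w i k * v $ k)"
      by (subst sum.remove[of UNIV i]) (auto intro!: sum.cong)
    finally show ?thesis by (simp add: sum_negf)
  qed
  have key: "ws i * M = 0 \<and> (\<forall>k\<in>UNIV - {i}. w i k * (M - \<bar>v $ k\<bar>) = 0)" if vi: "\<bar>v $ i\<bar> = M" for i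
  proof -
    have "((\<Sum>m\<in>UNIV - {i}. w i m) + ws i) * M = \<bar>(\<Sum>m\<in>UNIV - {i}. w i m * v $ m)\<bar>"
      using row[of i] vi w_nonneg ws_nonneg
      by (metis abs_mult abs_of_nonneg add_nonneg_nonneg sum_nonneg)
    also have "\<dots> \<le> (\<Sum>m\<in>UNIV - {i}. w i m * \<bar>v $ m\<bar>)"
      by (rule order_trans[OF sum_abs]) (simp add: abs_mult w_nonneg)
    finally have "ws i * M + (\<Sum>m\<in>UNIV - {i}. w i m * (M - \<bar>v $ m\<bar>)) \<le> 0"
      by (simp add: algebra_simps sum_subtractf sum_distrib_left)
    moreover have "0 \<le> ws i * M" using ws_nonneg le[of i] by simp
    moreover have t: "\<forall>m\<in>UNIV - {i}. 0 \<le> w i m * (M - \<bar>v $ m\<bar>)"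
      using w_nonneg le by simp
    moreover have "0 \<le> (\<Sum>m\<in>UNIV - {i}. w i m * (M - \<bar>v $ m\<bar>))"
      using t by (intro sum_nonneg) auto
    ultimately have "ws i * M = 0" "(\<Sum>m\<in>UNIV - {i}. w i m * (M - \<bar>v $ m\<bar>)) = 0" by linarith+
    moreover have "finite (UNIV - {i})" by simp
    ultimately show ?thesis using t sum_nonneg_eq_0_iff[of "UNIV - {i}" "\<lambda>m. w i m * (M - \<bar>v $ m\<bar>)"]
      by blast
  qed
  have M0: "M \<le> 0"
  proof (rule ccontr)
    assume "\<not> M \<le> 0"
    then have Mpos: "M > 0" by simp
    have "reach_from_source w ws i \<Longrightarrow> \<bar>v $ i\<bar> \<noteq> M" for i
    proof (induction rule: reach_from_source.induct)
      case (src i)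
      then show ?case using key[of i] Mpos by auto
    next
      case (step k i)
      show ?case
      proof
        assume "\<bar>v $ i\<bar> = M"
        then have "w i k * (M - \<bar>v $ k\<bar>) = 0" using key[of i] step.hyps(2) by auto
        then show False using step.hyps(3) step.IH by simp
      qed
    qed
    moreover obtain i where "\<bar>v $ i\<bar> = M"
    proof -
      have "M \<in> range (\<lambda>i. \<bar>v $ i\<bar>)" unfolding M_def vinf_def by (rule Max_in) auto
      then show ?thesis using that by auto
    qed
    ultimately show False using paths by blast
  qed
  show ?thesis using le M0 by (simp add: vec_eq_iff) (meson abs_le_zero_iff order_trans)
qed

theorem lemma1:
  fixes w :: "'n::finite \<Rightarrow> 'n \<Rightarrow> real" and ws :: "'n \<Rightarrow> real"
    and \<alpha> \<beta> t1 t2 :: real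
    and zs zs' :: "real \<Rightarrow> real"
    and Zs Zs' :: "real \<Rightarrow> real ^ 'n"
  defines "K \<equiv> pinned_laplacian w ws" and "B \<equiv> source_vec ws"
  assumes n_gt_1: "CARD('n) \<ge> 2"
    and w_nonneg: "\<And>i k. w i k \<ge> 0" and w_irrefl: "\<And>i. w i i = 0"
    and ws_nonneg: "\<And>i. ws i \<ge> 0"
    and paths: "\<And>i. reach_from_source w ws i"
    and \<alpha>_pos: "\<alpha> > 0" and \<beta>_pos: "\<beta> > 0"
    and t12: "t1 < t2"
    and zs_deriv: "\<And>t. t \<in> {t1..t2} \<Longrightarrow> (zs has_real_derivative zs' t) (at t within {t1..t2})"
    and zs'_cont: "continuous_on {t1..t2} zs'"
    and Zs_deriv: "\<And>t. t \<in> {t1..t2} \<Longrightarrow> (Zs has_vector_derivative Zs' t) (at t within {t1..t2})"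
    and Zs_ode: "\<And>t. t \<in> {t1..t2} \<Longrightarrow>
        Zs' t = - (\<alpha> * \<beta>) *\<^sub>R (K *v Zs t) + (mat 1 - \<beta> *\<^sub>R K) *v Zs' t
                + (\<beta> * (\<alpha> * zs t + zs' t)) *\<^sub>R B"
  shows "\<forall>\<epsilon>>0. \<exists>\<delta>>0. \<forall>\<tau>>0. \<forall>Z Z' Z'' :: real \<Rightarrow> real ^ 'n.
     (\<forall>t\<in>{t1-\<tau>..t2}. (Z has_vector_derivative Z' t) (at t within {t1-\<tau>..t2})
                      \<and> (Z' has_vector_derivative Z'' t) (at t within {t1-\<tau>..t2}))
     \<and> (\<forall>t\<in>{t1..t2}. Z' t = - (\<alpha> * \<beta>) *\<^sub>R (K *v Z t) + (1 / \<tau>) *\<^sub>R (Z t - Z (t - \<tau>))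
              - (\<beta> / \<tau>) *\<^sub>R (K *v (Z t - Z (t - \<tau>)))
              + (\<alpha> * \<beta> * zs t) *\<^sub>R B + (\<beta> * zs' t) *\<^sub>R B)
     \<and> Z t1 = Zs t1
     \<and> (\<forall>t\<in>{t1-\<tau>..t2}. vinf (\<tau> *\<^sub>R Z'' t) \<le> \<delta>)
     \<longrightarrow> (\<forall>t\<in>{t1..t2}. vinf (Z t - Zs t) \<le> \<epsilon>)"
proof -
  have Kone: "K *v vec 1 = B" unfolding K_def B_def by (rule K_one)
  have Kone1: "K *v (1::real^'n) = B" using Kone by simp
  have Kinj: "K *v v = 0 \<Longrightarrow> v = 0" for v
    unfolding K_def by (rule K_inj[OF w_nonneg ws_nonneg paths])
  have "inj ((*v) K)"
  proof (rule injI)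
    fix x y assume "K *v x = K *v y"
    then have "K *v (x - y) = 0" by (simp add: matrix_vector_mult_diff_distrib)
    then show "x = y" using Kinj[of "x - y"] by simp
  qed
  then obtain c where c: "c > 0" "\<And>x. c * norm x \<le> norm (K *v x)"
    using linear_inj_bounded_below_pos[of "(*v) K"] by auto
  have matI: "(mat 1 - \<beta> *\<^sub>R K) *v x = x - \<beta> *\<^sub>R (K *v x)" for x
    by (simp add: matrix_vector_mult_diff_rdistrib scaleR_matrix_vector_assoc)
  define N where "N = real CARD('n)"
  have N: "N > 0" unfolding N_def by simp
  define A where "A = (1 + 1 / (c * \<beta>)) * N"
  have "0 < 1 / (c * \<beta>)" using c(1) \<beta>_pos by simp
  then have p: "0 < 1 + 1 / (c * \<beta>)" by linarith
  have A: "A > 0" unfolding A_def by (rule mult_pos_pos[OF p N])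
  define T where "T = t2 - t1"
  have T: "T > 0" using t12 unfolding T_def by simp
  have main: "vinf (Z t - Zs t) \<le> exp (\<alpha> * T) * A * T * \<delta>"
    if \<delta>0: "\<delta> > 0" and \<tau>: "\<tau> > 0" and t: "t \<in> {t1..t2}"
      and H1: "\<forall>t\<in>{t1-\<tau>..t2}. (Z has_vector_derivative Z' t) (at t within {t1-\<tau>..t2})
                      \<and> (Z' has_vector_derivative Z'' t) (at t within {t1-\<tau>..t2})"
      and H2: "\<forall>t\<in>{t1..t2}. Z' t = - (\<alpha> * \<beta>) *\<^sub>R (K *v Z t) + (1 / \<tau>) *\<^sub>R (Z t - Z (t - \<tau>))
              - (\<beta> / \<tau>) *\<^sub>R (K *v (Z t - Z (t - \<tau>)))
              + (\<alpha> * \<beta> * zs t) *\<^sub>R B + (\<beta> * zs' t) *\<^sub>R B"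
      and H3: "Z t1 = Zs t1"
      and H4: "\<forall>t\<in>{t1-\<tau>..t2}. vinf (\<tau> *\<^sub>R Z'' t) \<le> \<delta>"
    for \<delta> \<tau> :: real and Z Z' Z'' :: "real \<Rightarrow> real ^ 'n" and t
  proof -
    have sub: "{t1..t2} \<subseteq> {t1-\<tau>..t2}" using \<tau> by auto
    define C where "C = (\<lambda>s. \<alpha> * zs s + zs' s)"
    define R where "R = (\<lambda>s. Z' s - (1 / \<tau>) *\<^sub>R (Z s - Z (s - \<tau>)))"
    have Rb: "norm (R s) \<le> N * \<delta>" if s: "s \<in> {t1..t2}" for s
    proof -
      have "norm (Z s - Z (s-\<tau>) - \<tau> *\<^sub>R Z' s) \<le> (N * \<delta> / \<tau>) * \<tau>^2"
      proof (rule taylor1[OF \<tau>])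
        fix u assume u: "u \<in> {s-\<tau>..s}"
        then have u': "u \<in> {t1-\<tau>..t2}" using s by auto
        have ss: "{s-\<tau>..s} \<subseteq> {t1-\<tau>..t2}" using s by auto
        show "(Z has_vector_derivative Z' u) (at u within {s-\<tau>..s})"
          using has_vector_derivative_within_subset[OF conjunct1[OF bspec[OF H1 u']] ss] .
        show "(Z' has_vector_derivative Z'' u) (at u within {s-\<tau>..s})"
          using has_vector_derivative_within_subset[OF conjunct2[OF bspec[OF H1 u']] ss] .
        have "\<tau> * norm (Z'' u) = norm (\<tau> *\<^sub>R Z'' u)" using \<tau> by simp
        also have "\<dots> \<le> N * vinf (\<tau> *\<^sub>R Z'' u)" unfolding N_def by (rule norm_le_vinf)
        also have "\<dots> \<le> N * \<delta>" using H4 u' N by (simp add: mult_left_mono)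
        finally show "norm (Z'' u) \<le> N * \<delta> / \<tau>" using \<tau> by (simp add: field_simps)
      qed
      also have "\<dots> = \<tau> * (N * \<delta>)" using \<tau> by (simp add: power2_eq_square)
      finally have h: "norm (Z s - Z (s-\<tau>) - \<tau> *\<^sub>R Z' s) \<le> \<tau> * (N * \<delta>)" .
      have "R s = - (1 / \<tau>) *\<^sub>R (Z s - Z (s-\<tau>) - \<tau> *\<^sub>R Z' s)"
        unfolding R_def using \<tau> by (simp add: algebra_simps)
      then have "norm (R s) = norm (Z s - Z (s-\<tau>) - \<tau> *\<^sub>R Z' s) / \<tau>" using \<tau> by simp
      then show ?thesis using h \<tau> by (simp add: divide_le_eq mult.commute)
    qed
    have ideal: "Zs' s = - \<alpha> *\<^sub>R Zs s + C s *\<^sub>R vec 1" if s: "s \<in> {t1..t2}" for s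
    proof -
      have "\<beta> *\<^sub>R (K *v (Zs' s + \<alpha> *\<^sub>R Zs s - C s *\<^sub>R vec 1)) = 
            \<beta> *\<^sub>R (K *v Zs' s) + (\<alpha> * \<beta>) *\<^sub>R (K *v Zs s) - (\<beta> * C s) *\<^sub>R B"
        by (simp add: algebra_simps Kone Kone1)
      also have "\<dots> = 0" using Zs_ode[OF s] unfolding matI C_def by (simp add: algebra_simps)
      finally have "K *v (Zs' s + \<alpha> *\<^sub>R Zs s - C s *\<^sub>R vec 1) = 0" using \<beta>_pos by simp
      then have "Zs' s + \<alpha> *\<^sub>R Zs s - C s *\<^sub>R vec 1 = 0" by (rule Kinj)
      then show ?thesis by (simp add: algebra_simps)
    qed
    define G where "G = (\<lambda>s. (1 / \<tau>) *\<^sub>R (Z s - Z (s - \<tau>)) + \<alpha> *\<^sub>R Z s - C s *\<^sub>R vec 1)"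
    have Geq: "K *v G s = - (1 / \<beta>) *\<^sub>R R s" if s: "s \<in> {t1..t2}" for s
    proof -
      have "\<beta> *\<^sub>R (K *v G s) = - R s"
      proof -
        have "\<beta> *\<^sub>R (K *v G s) = (\<beta> / \<tau>) *\<^sub>R (K *v (Z s - Z (s - \<tau>))) + (\<alpha> * \<beta>) *\<^sub>R (K *v Z s)
             - (\<beta> * C s) *\<^sub>R B"
          unfolding G_def by (simp add: algebra_simps Kone Kone1)
        also have "\<dots> = - R s" using H2 s unfolding R_def C_def by (simp add: algebra_simps)
        finally show ?thesis .
      qed
      then have "(1/\<beta>) *\<^sub>R (\<beta> *\<^sub>R (K *v G s)) = (1/\<beta>) *\<^sub>R (- R s)" by simp
      then show ?thesis using \<beta>_pos by simp
    qed
    have EB: "norm ((Z' s - Zs' s) + \<alpha> *\<^sub>R (Z s - Zs s)) \<le> A * \<delta>" if s: "s \<in> {t1..t2}" for s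
    proof -
      have "c * norm (G s) \<le> norm (R s) / \<beta>" using c(2)[of "G s"] Geq[OF s] \<beta>_pos by simp
      then have g: "norm (G s) \<le> norm (R s) / (c * \<beta>)" using c(1) \<beta>_pos by (simp add: field_simps)
      have "(Z' s - Zs' s) + \<alpha> *\<^sub>R (Z s - Zs s) = G s + R s"
        unfolding G_def R_def ideal[OF s] by (simp add: algebra_simps)
      then have "norm ((Z' s - Zs' s) + \<alpha> *\<^sub>R (Z s - Zs s)) \<le> norm (R s) / (c * \<beta>) + norm (R s)"
        using g norm_triangle_ineq[of "G s" "R s"] by simp
      also have "\<dots> = (1 + 1 / (c * \<beta>)) * norm (R s)" by (simp add: field_simps)
      also have "\<dots> \<le> (1 + 1 / (c * \<beta>)) * (N * \<delta>)"
        using Rb[OF s] c(1) \<beta>_pos by (intro mult_left_mono) auto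
      finally show ?thesis unfolding A_def by (simp add: mult.assoc)
    qed
    define f where "f = (\<lambda>s. exp (\<alpha> * s) *\<^sub>R (Z s - Zs s))"
    have fd: "(f has_vector_derivative exp (\<alpha> * s) *\<^sub>R ((Z' s - Zs' s) + \<alpha> *\<^sub>R (Z s - Zs s)))
              (at s within {t1..t})" if s: "s \<in> {t1..t}" for s
    proof -
      have s': "s \<in> {t1..t2}" "s \<in> {t1-\<tau>..t2}" using s t \<tau> by auto
      have st: "{t1..t} \<subseteq> {t1..t2}" "{t1..t} \<subseteq> {t1-\<tau>..t2}" using t \<tau> by auto
      have dZ: "(Z has_vector_derivative Z' s) (at s within {t1..t})"
        using has_vector_derivative_within_subset[OF conjunct1[OF bspec[OF H1 s'(2)]] st(2)] .
      have dZs: "(Zs has_vector_derivative Zs' s) (at s within {t1..t})"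
        using has_vector_derivative_within_subset[OF Zs_deriv[OF s'(1)] st(1)] .
      have de: "((\<lambda>s. exp (\<alpha> * s)) has_real_derivative exp (\<alpha> * s) * \<alpha>) (at s within {t1..t})"
        by (auto intro!: derivative_eq_intros)
      show ?thesis unfolding f_def
        using has_vector_derivative_scaleR[OF de has_vector_derivative_diff[OF dZ dZs]]
        by (simp add: algebra_simps)
    qed
    have "norm (f t - f t1) \<le> (exp (\<alpha> * t2) * (A * \<delta>)) * (t - t1)"
    proof (rule vd_bound)
      show "t1 \<le> t" using t by simp
      fix s assume s: "s \<in> {t1..t}"
      show "(f has_vector_derivative exp (\<alpha> * s) *\<^sub>R ((Z' s - Zs' s) + \<alpha> *\<^sub>R (Z s - Zs s)))
              (at s within {t1..t})" by (rule fd[OF s])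
      have s': "s \<in> {t1..t2}" using s t by auto
      have "norm (exp (\<alpha> * s) *\<^sub>R ((Z' s - Zs' s) + \<alpha> *\<^sub>R (Z s - Zs s)))
          = exp (\<alpha> * s) * norm ((Z' s - Zs' s) + \<alpha> *\<^sub>R (Z s - Zs s))" by simp
      also have "\<dots> \<le> exp (\<alpha> * t2) * (A * \<delta>)"
        using EB[OF s'] s' \<alpha>_pos by (intro mult_mono) auto
      finally show "norm (exp (\<alpha> * s) *\<^sub>R ((Z' s - Zs' s) + \<alpha> *\<^sub>R (Z s - Zs s))) \<le> exp (\<alpha> * t2) * (A * \<delta>)" .
    qed
    then have fb: "exp (\<alpha> * t) * norm (Z t - Zs t) \<le> exp (\<alpha> * t2) * (A * \<delta>) * (t - t1)"
      unfolding f_def using H3 by simp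
    have "exp (\<alpha> * t) * norm (Z t - Zs t) \<le> exp (\<alpha> * t) * (exp (\<alpha> * T) * A * T * \<delta>)"
    proof -
      have "exp (\<alpha> * t2) = exp (\<alpha> * t) * exp (\<alpha> * (t2 - t))" by (simp add: mult_exp_exp algebra_simps)
      moreover have "exp (\<alpha> * (t2 - t)) \<le> exp (\<alpha> * T)" using t \<alpha>_pos unfolding T_def by simp
      moreover have "t - t1 \<le> T" using t unfolding T_def by simp
      ultimately have m: "exp (\<alpha> * (t2 - t)) * (t - t1) \<le> exp (\<alpha> * T) * T"
        using t by (intro mult_mono) auto
      have "exp (\<alpha> * t) * (A * \<delta>) * (exp (\<alpha> * (t2 - t)) * (t - t1))
          \<le> exp (\<alpha> * t) * (A * \<delta>) * (exp (\<alpha> * T) * T)"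
        by (rule mult_left_mono[OF m]) (use A \<delta>0 in simp)
      then have "exp (\<alpha> * t2) * (A * \<delta>) * (t - t1) \<le> exp (\<alpha> * t) * (exp (\<alpha> * T) * A * T * \<delta>)"
        using \<open>exp (\<alpha> * t2) = exp (\<alpha> * t) * exp (\<alpha> * (t2 - t))\<close> by (simp add: mult_ac)
      with fb show ?thesis by linarith
    qed
    then have "norm (Z t - Zs t) \<le> exp (\<alpha> * T) * A * T * \<delta>" by simp
    then show ?thesis using vinf_le_norm[of "Z t - Zs t"] by linarith
  qed
  show ?thesis
  proof (intro allI impI)
    fix \<epsilon> :: real assume \<epsilon>: "\<epsilon> > 0"
    define \<delta> where "\<delta> = \<epsilon> / (exp (\<alpha> * T) * A * T)"
    have \<delta>: "\<delta> > 0" unfolding \<delta>_def using \<epsilon> A T by simp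
    have e: "exp (\<alpha> * T) * A * T * \<delta> = \<epsilon>" unfolding \<delta>_def using A T by simp
    show "\<exists>\<delta>>0. \<forall>\<tau>>0. \<forall>Z Z' Z'' :: real \<Rightarrow> real ^ 'n.
     (\<forall>t\<in>{t1-\<tau>..t2}. (Z has_vector_derivative Z' t) (at t within {t1-\<tau>..t2})
                      \<and> (Z' has_vector_derivative Z'' t) (at t within {t1-\<tau>..t2}))
     \<and> (\<forall>t\<in>{t1..t2}. Z' t = - (\<alpha> * \<beta>) *\<^sub>R (K *v Z t) + (1 / \<tau>) *\<^sub>R (Z t - Z (t - \<tau>))
              - (\<beta> / \<tau>) *\<^sub>R (K *v (Z t - Z (t - \<tau>)))
              + (\<alpha> * \<beta> * zs t) *\<^sub>R B + (\<beta> * zs' t) *\<^sub>R B)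
     \<and> Z t1 = Zs t1
     \<and> (\<forall>t\<in>{t1-\<tau>..t2}. vinf (\<tau> *\<^sub>R Z'' t) \<le> \<delta>)
     \<longrightarrow> (\<forall>t\<in>{t1..t2}. vinf (Z t - Zs t) \<le> \<epsilon>)"
      apply (rule exI[of _ \<delta>])
      apply (intro conjI allI impI ballI)
      subgoal using \<delta> .
      subgoal for \<tau> Z Z' Z'' t using main[of \<delta> \<tau> t Z Z' Z''] e \<delta> by auto
      done
  qed
qed
end
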